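(* Let $p$ be an odd prime, $\gamma>0$, $H\in\mathbb{Z}_p^{l\times n}$ and $c\in\mathbb{Z}_p^l$ independent and uniform, $\Lambda_o=\gamma(\{v\in\mathbb{Z}_p^n:Hv=c\}-\frac{p-1}{2})$, and $S'=[-\frac{\gamma p}{2},\frac{\gamma p}{2}]^n\cap\gamma\mathbb{Z}^n$. Let $(X,\hat U)$ be jointly distributed, with $\hat U$ taking values in $\gamma(\{0,\dots,p-1\}-\frac{p-1}{2})$, fix $\epsilon>0$ and $x\in\mathbb{R}^n$, and let $\theta(x)=\sum_{u\in\Lambda_o}\mathbb{1}\{u\in A_\epsilon^n(\hat U|x)\}$. Let $Z^n$ be uniform on $S'$. Then $$\Big(1-\frac1{p^{n-l}}\Big)p^{n-l}\Pr\big(Z^n\in A_\epsilon^n(\hat U|x)\big)\le\mathbb{E}\{\theta(x)\}\le p^{n-l}\Pr\big(Z^n\in A_\epsilon^n(\hat U|x)\big)+\frac{2^l}{p^{n(l-1)}}.$$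
   Context: Weak* typicality: the Prokhorov distance is $\pi_d(P_1,P_2)=\inf\{\epsilon>0:P_1(A)<P_2(A^\epsilon)+\epsilon\text{ and }P_2(A)<P_1(A^\epsilon)+\epsilon\ \forall\text{ Borel }A\subseteq\mathbb{R}^d\}$, $A^\epsilon=\{z:\exists y\in A,\|z-y\|<\epsilon\}$. The joint empirical measure of $(x,u)\in\mathbb{R}^n\times\mathbb{R}^n$ is $\bar P_{xu}(A\times B)=\frac1n\sum_i\mathbb{1}\{x_i\in A,u_i\in B\}$, and $A_\epsilon^n(\hat U|x)=\{u\in\mathbb{R}^n:\pi_2(\bar P_{xu},P_{X\hat U})<\epsilon\}$. Elements of $\mathbb{Z}_p$ are identified with $\{0,\dots,p-1\}$. *)

theory Defs
  imports "HOL-Probability.Probability"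
begin

text \<open>Vectors in R^n / Z_p^n are functions on nat, relevant on indices below n,
  and zero elsewhere. Elements of Z_p are identified with 0..p-1.\<close>

definition zp_vecs :: "nat \<Rightarrow> nat \<Rightarrow> (nat \<Rightarrow> nat) set" where
  "zp_vecs p n = {v. (\<forall>i<n. v i < p) \<and> (\<forall>i\<ge>n. v i = 0)}"

definition zp_mats :: "nat \<Rightarrow> nat \<Rightarrow> nat \<Rightarrow> (nat \<Rightarrow> nat \<Rightarrow> nat) set" where
  "zp_mats p l n = {H. (\<forall>i<l. \<forall>j<n. H i j < p) \<and> (\<forall>i j. (i \<ge> l \<or> j \<ge> n) \<longrightarrow> H i j = 0)}"

definition zp_solutions :: "nat \<Rightarrow> nat \<Rightarrow> nat \<Rightarrow> (nat \<Rightarrow> nat \<Rightarrow> nat) \<Rightarrow> (nat \<Rightarrow> nat) \<Rightarrow> (nat \<Rightarrow> nat) set" where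
  "zp_solutions p l n H c = {v \<in> zp_vecs p n. \<forall>i<l. (\<Sum>j<n. H i j * v j) mod p = c i}"

definition Lambda_o :: "nat \<Rightarrow> nat \<Rightarrow> nat \<Rightarrow> real \<Rightarrow> (nat \<Rightarrow> nat \<Rightarrow> nat) \<Rightarrow> (nat \<Rightarrow> nat) \<Rightarrow> (nat \<Rightarrow> real) set" where
  "Lambda_o p l n \<gamma> H c =
     (\<lambda>v. \<lambda>i. if i < n then \<gamma> * (real (v i) - (real p - 1) / 2) else 0) ` zp_solutions p l n H c"

definition S_prime :: "nat \<Rightarrow> nat \<Rightarrow> real \<Rightarrow> (nat \<Rightarrow> real) set" where
  "S_prime p n \<gamma> = {z. (\<forall>i<n. (\<exists>k::int. z i = \<gamma> * real_of_int k) \<and> \<bar>z i\<bar> \<le> \<gamma> * real p / 2)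
                         \<and> (\<forall>i\<ge>n. z i = 0)}"

definition eps_enlarge :: "(real \<times> real) set \<Rightarrow> real \<Rightarrow> (real \<times> real) set" where
  "eps_enlarge A e = {z. \<exists>y\<in>A. norm (z - y) < e}"

definition prokhorov :: "(real \<times> real) measure \<Rightarrow> (real \<times> real) measure \<Rightarrow> real" where
  "prokhorov P1 P2 = Inf {e. e > 0 \<and> (\<forall>A \<in> sets (borel :: (real \<times> real) measure).
       measure P1 A < measure P2 (eps_enlarge A e) + e \<and> measure P2 A < measure P1 (eps_enlarge A e) + e)}"

definition emp_measure :: "nat \<Rightarrow> (nat \<Rightarrow> real) \<Rightarrow> (nat \<Rightarrow> real) \<Rightarrow> (real \<times> real) measure" where
  "emp_measure n x u = measure_pmf (pmf_of_multiset (image_mset (\<lambda>i. (x i, u i)) (mset_set {..<n})))"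

definition typical_set :: "nat \<Rightarrow> (real \<times> real) measure \<Rightarrow> real \<Rightarrow> (nat \<Rightarrow> real) \<Rightarrow> (nat \<Rightarrow> real) set" where
  "typical_set n P e x = {u. prokhorov (emp_measure n x u) P < e}"

end

theory Submission
  imports Defs
begin

lemma pair_pmf_of_set':
  assumes "finite A" "A \<noteq> {}" "finite B" "B \<noteq> {}"
  shows "pair_pmf (pmf_of_set A) (pmf_of_set B) = pmf_of_set (A \<times> B)"
  by (rule pmf_eqI) (auto simp: pmf_pair assms card_cartesian_product indicator_def)

lemma zp_vecs_dflt: "zp_vecs p n = PiE_dflt {..<n} 0 (\<lambda>_. {..<p})"
  unfolding zp_vecs_def PiE_dflt_def
proof (rule Collect_cong)
  fix f :: "nat \<Rightarrow> nat"
  show "((\<forall>i<n. f i < p) \<and> (\<forall>i\<ge>n. f i = 0)) =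
        (\<forall>x. (x \<in> {..<n} \<longrightarrow> f x \<in> {..<p}) \<and> (x \<notin> {..<n} \<longrightarrow> f x = 0))"
    by (simp add: not_less) blast
qed

lemma zp_vecs_finite: "finite (zp_vecs p n)"
  unfolding zp_vecs_dflt by (rule finite_PiE_dflt) simp_all

lemma zp_vecs_card: "card (zp_vecs p n) = p ^ n"
  unfolding zp_vecs_dflt by (subst card_PiE_dflt) simp_all

lemma zp_mats_finite: "finite (zp_mats p l n)"
proof -
  have "zp_mats p l n \<subseteq> PiE_dflt {..<l} (\<lambda>_. 0) (\<lambda>_. zp_vecs p n)"
  proof
    fix H assume H: "H \<in> zp_mats p l n"
    have "H i \<in> zp_vecs p n" if "i < l" for i using H that by (simp add: zp_mats_def zp_vecs_def)
    moreover have "H i = (\<lambda>_. 0)" if "\<not> i < l" for i using H that by (simp add: zp_mats_def fun_eq_iff)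
    ultimately show "H \<in> PiE_dflt {..<l} (\<lambda>_. 0) (\<lambda>_. zp_vecs p n)" by (simp add: PiE_dflt_def)
  qed
  moreover have "finite (PiE_dflt {..<l} (\<lambda>_. 0) (\<lambda>_. zp_vecs p n))"
    using zp_vecs_finite by auto
  ultimately show ?thesis by (rule finite_subset)
qed

lemma zp_mats_ne: "p > 0 \<Longrightarrow> (\<lambda>_ _. 0) \<in> zp_mats p l n"
  by (auto simp: zp_mats_def)

lemma card_sum_if: "finite V \<Longrightarrow> real (card {v \<in> V. Q v}) = (\<Sum>v\<in>V. if Q v then 1 else 0)"
  using sum.inter_filter[of V "\<lambda>_. (1::real)" Q] by simp

lemma zp_vecs_ne: "p > 0 \<Longrightarrow> (\<lambda>_. 0) \<in> zp_vecs p n"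
  by (auto simp: zp_vecs_def)

lemma card_c:
  assumes "p > 0" "v \<in> zp_vecs p n"
  shows "card {c \<in> zp_vecs p l. v \<in> zp_solutions p l n H c} = 1"
proof -
  let ?c = "\<lambda>i. if i < l then (\<Sum>j<n. H i j * v j) mod p else 0"
  have "{c \<in> zp_vecs p l. v \<in> zp_solutions p l n H c} = {?c}"
  proof (intro set_eqI iffI)
    fix c assume "c \<in> {c \<in> zp_vecs p l. v \<in> zp_solutions p l n H c}"
    then have c: "c \<in> zp_vecs p l" "\<forall>i<l. (\<Sum>j<n. H i j * v j) mod p = c i"
      by (auto simp: zp_solutions_def)
    show "c \<in> {?c}"
    proof (simp, rule ext)
      fix i show "c i = ?c i" using c by (cases "i < l") (auto simp: zp_vecs_def)
    qed
  next
    fix c assume "c \<in> {?c}"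
    then have c: "c = ?c" by simp
    show "c \<in> {c \<in> zp_vecs p l. v \<in> zp_solutions p l n H c}"
      using assms unfolding c by (auto simp: zp_vecs_def zp_solutions_def)
  qed
  then show ?thesis by simp
qed

lemma S_prime_image:
  assumes "odd p" "\<gamma> > 0"
  shows "S_prime p n \<gamma> = (\<lambda>v. \<lambda>i. if i < n then \<gamma> * (real (v i) - (real p - 1) / 2) else 0) ` zp_vecs p n"
    (is "_ = ?g ` _")
proof -
  obtain h where ph: "p = 2 * h + 1" using assms(1) oddE by blast
  have hr: "(real p - 1) / 2 = real h" using ph by simp
  show ?thesis
  proof (intro set_eqI iffI)
    fix z assume z: "z \<in> S_prime p n \<gamma>"
    define k where "k i = (SOME k::int. z i = \<gamma> * real_of_int k)" for i
    have zk: "z i = \<gamma> * real_of_int (k i)" "\<bar>k i\<bar> \<le> int h" if "i < n" for i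
    proof -
      from z that have "(\<exists>k::int. z i = \<gamma> * real_of_int k) \<and> \<bar>z i\<bar> \<le> \<gamma> * real p / 2"
        unfolding S_prime_def by blast
      then obtain k0 :: int where "z i = \<gamma> * real_of_int k0" and b: "\<bar>z i\<bar> \<le> \<gamma> * real p / 2"
        by blast
      then show zi: "z i = \<gamma> * real_of_int (k i)" unfolding k_def by (metis (mono_tags) someI)
      have "\<gamma> * \<bar>real_of_int (k i)\<bar> \<le> \<gamma> * (real p / 2)"
        using b zi assms(2) by (simp add: abs_mult)
      then have "\<bar>real_of_int (k i)\<bar> \<le> real p / 2" using assms(2) by simp
      then have "2 * \<bar>k i\<bar> \<le> int p" by linarith
      then show "\<bar>k i\<bar> \<le> int h" using ph by linarith
    qed
    define v where "v i = (if i < n then nat (k i + int h) else 0)" for i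
    have "v \<in> zp_vecs p n" using zk(2) ph by (force simp: v_def zp_vecs_def)
    moreover have "z = ?g v"
    proof
      fix i show "z i = ?g v i"
      proof (cases "i < n")
        case True
        then show ?thesis using zk[OF True] by (simp add: v_def hr)
      next
        case False
        then show ?thesis using z by (simp add: S_prime_def)
      qed
    qed
    ultimately show "z \<in> ?g ` zp_vecs p n" by blast
  next
    fix z assume "z \<in> ?g ` zp_vecs p n"
    then obtain v where v: "v \<in> zp_vecs p n" and zv: "z = ?g v" by blast
    have "(\<exists>k::int. z i = \<gamma> * real_of_int k) \<and> \<bar>z i\<bar> \<le> \<gamma> * real p / 2" if "i < n" for i
    proof
      have vi: "v i < p" using v that by (simp add: zp_vecs_def)
      show "\<exists>k::int. z i = \<gamma> * real_of_int k"
        by (rule exI[of _ "int (v i) - int h"]) (simp add: zv that hr)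
      have "real (v i) \<le> 2 * real h" using vi ph by simp
      then have "\<bar>real (v i) - real h\<bar> \<le> real p / 2" using ph unfolding abs_le_iff by simp
      then have "\<gamma> * \<bar>real (v i) - real h\<bar> \<le> \<gamma> * (real p / 2)"
        using assms(2) by (intro mult_left_mono) auto
      then show "\<bar>z i\<bar> \<le> \<gamma> * real p / 2" using assms(2) by (simp add: zv that hr abs_mult)
    qed
    then show "z \<in> S_prime p n \<gamma>" by (simp add: S_prime_def zv)
  qed
qed

lemma g_inj:
  assumes "\<gamma> > 0"
  shows "inj_on (\<lambda>v. \<lambda>i. if i < n then \<gamma> * (real (v i) - (real p - 1) / 2) else 0) (zp_vecs p n)"
proof (rule inj_onI)
  fix v w assume v: "v \<in> zp_vecs p n" and w: "w \<in> zp_vecs p n"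
    and eq: "(\<lambda>i. if i < n then \<gamma> * (real (v i) - (real p - 1) / 2) else 0) =
             (\<lambda>i. if i < n then \<gamma> * (real (w i) - (real p - 1) / 2) else 0)"
  show "v = w"
  proof
    fix i show "v i = w i"
    proof (cases "i < n")
      case True
      then have "\<gamma> * (real (v i) - (real p - 1) / 2) = \<gamma> * (real (w i) - (real p - 1) / 2)"
        using fun_cong[OF eq, of i] by simp
      then show ?thesis using assms by simp
    next
      case False
      then show ?thesis using v w by (simp add: zp_vecs_def)
    qed
  qed
qed

theorem mainTheorem14:
  fixes p l n :: nat and \<gamma> \<epsilon> :: real and P :: "(real \<times> real) measure" and x :: "nat \<Rightarrow> real"
  assumes "prime p" and "odd p"
    and "\<gamma> > 0"
    and "n \<ge> 1"
    and "prob_space P" and "sets P = sets borel"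
    and "measure P (UNIV \<times> ((\<lambda>k. \<gamma> * (real k - (real p - 1) / 2)) ` {0..<p})) = 1"
    and "\<epsilon> > 0"
  shows
    "(1 - 1 / real p powr (real n - real l)) * real p powr (real n - real l)
        * measure (pmf_of_set (S_prime p n \<gamma>)) (typical_set n P \<epsilon> x)
       \<le> measure_pmf.expectation (pair_pmf (pmf_of_set (zp_mats p l n)) (pmf_of_set (zp_vecs p l)))
            (\<lambda>(H, c). real (card (Lambda_o p l n \<gamma> H c \<inter> typical_set n P \<epsilon> x)))
     \<and> measure_pmf.expectation (pair_pmf (pmf_of_set (zp_mats p l n)) (pmf_of_set (zp_vecs p l)))
            (\<lambda>(H, c). real (card (Lambda_o p l n \<gamma> H c \<inter> typical_set n P \<epsilon> x)))
       \<le> real p powr (real n - real l) * measure (pmf_of_set (S_prime p n \<gamma>)) (typical_set n P \<epsilon> x)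
          + 2 ^ l / real p powr (real n * (real l - 1))"
proof -
  define T where "T = typical_set n P \<epsilon> x"
  define g where "g = (\<lambda>v. \<lambda>i. if i < n then \<gamma> * (real (v i) - (real p - 1) / 2) else (0::real))"
  define A where "A = zp_mats p l n"
  define B where "B = zp_vecs p l"
  define V where "V = zp_vecs p n"
  define N where "N = card {v \<in> V. g v \<in> T}"
  have p0: "p > 0" using assms(1) prime_gt_0_nat by blast
  have fA: "finite A" "A \<noteq> {}" using zp_mats_finite zp_mats_ne[OF p0] unfolding A_def by blast+
  have fB: "finite B" "B \<noteq> {}" using zp_vecs_finite zp_vecs_ne[OF p0] unfolding B_def by blast+
  have fV: "finite V" using zp_vecs_finite unfolding V_def by blast
  have inj: "inj_on g V" unfolding g_def V_def by (rule g_inj[OF assms(3)])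
  have solV: "zp_solutions p l n H c \<subseteq> V" for H c by (auto simp: zp_solutions_def V_def)
  have cardL: "real (card (Lambda_o p l n \<gamma> H c \<inter> T)) =
      (\<Sum>v\<in>V. if v \<in> zp_solutions p l n H c \<and> g v \<in> T then 1 else 0)" for H c
  proof -
    have "Lambda_o p l n \<gamma> H c \<inter> T = g ` {v \<in> V. v \<in> zp_solutions p l n H c \<and> g v \<in> T}"
      using solV unfolding Lambda_o_def g_def by blast
    moreover have "card (g ` {v \<in> V. v \<in> zp_solutions p l n H c \<and> g v \<in> T}) =
        card {v \<in> V. v \<in> zp_solutions p l n H c \<and> g v \<in> T}"
      by (rule card_image) (rule inj_on_subset[OF inj], blast)
    moreover have "real (card {v \<in> V. v \<in> zp_solutions p l n H c \<and> g v \<in> T}) =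
        (\<Sum>v\<in>V. if v \<in> zp_solutions p l n H c \<and> g v \<in> T then 1 else 0)"
      using card_sum_if[OF fV] by simp
    ultimately show ?thesis by simp
  qed
  have E: "measure_pmf.expectation (pair_pmf (pmf_of_set A) (pmf_of_set B))
            (\<lambda>(H, c). real (card (Lambda_o p l n \<gamma> H c \<inter> T))) = real N / real p ^ l"
  proof -
    have "(\<Sum>(H,c)\<in>A \<times> B. real (card (Lambda_o p l n \<gamma> H c \<inter> T)))
        = (\<Sum>H\<in>A. \<Sum>c\<in>B. \<Sum>v\<in>V. if v \<in> zp_solutions p l n H c \<and> g v \<in> T then 1 else 0)"
      by (subst sum.cartesian_product[symmetric]) (simp add: cardL)
    also have "\<dots> = (\<Sum>H\<in>A. \<Sum>v\<in>V. \<Sum>c\<in>B. if v \<in> zp_solutions p l n H c \<and> g v \<in> T then 1 else 0)"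
      by (rule sum.cong[OF refl], rule sum.swap)
    also have "\<dots> = (\<Sum>H\<in>A. \<Sum>v\<in>V. if g v \<in> T then (1::real) else 0)"
    proof (intro sum.cong refl)
      fix H v assume v: "v \<in> V"
      have "(\<Sum>c\<in>B. if v \<in> zp_solutions p l n H c \<and> g v \<in> T then 1 else 0)
          = (if g v \<in> T then real (card {c \<in> B. v \<in> zp_solutions p l n H c}) else (0::real))"
        by (cases "g v \<in> T") (simp_all add: card_sum_if[OF fB(1)])
      also have "\<dots> = (if g v \<in> T then 1 else 0)"
        using card_c[OF p0, of v n l H] v unfolding B_def V_def by simp
      finally show "(\<Sum>c\<in>B. if v \<in> zp_solutions p l n H c \<and> g v \<in> T then 1 else (0::real))
          = (if g v \<in> T then 1 else 0)" .
    qed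
    also have "\<dots> = real (card A) * real N"
      using card_sum_if[OF fV, of "\<lambda>v. g v \<in> T"] by (simp add: N_def)
    finally have S: "(\<Sum>(H,c)\<in>A \<times> B. real (card (Lambda_o p l n \<gamma> H c \<inter> T))) = real (card A) * real N" .
    have cB: "card B = p ^ l" unfolding B_def by (rule zp_vecs_card)
    have cA: "card A > 0" using fA by (simp add: card_gt_0_iff)
    show ?thesis
      using S fA fB cA cB
      by (simp add: pair_pmf_of_set' integral_pmf_of_set card_cartesian_product)
  qed
  have M: "measure (pmf_of_set (S_prime p n \<gamma>)) T = real N / real p ^ n"
  proof -
    have Sg: "S_prime p n \<gamma> = g ` V"
      unfolding g_def V_def by (rule S_prime_image[OF assms(2,3)])
    have "S_prime p n \<gamma> \<inter> T = g ` {v \<in> V. g v \<in> T}" unfolding Sg by auto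
    moreover have "inj_on g {v \<in> V. g v \<in> T}" by (rule inj_on_subset[OF inj]) auto
    ultimately have c1: "card (S_prime p n \<gamma> \<inter> T) = N"
      unfolding N_def by (simp add: card_image)
    have c2: "card (S_prime p n \<gamma>) = p ^ n"
      using Sg card_image[OF inj] zp_vecs_card unfolding V_def by simp
    have "S_prime p n \<gamma> \<noteq> {}" "finite (S_prime p n \<gamma>)"
      unfolding Sg V_def using zp_vecs_ne[OF p0] zp_vecs_finite by blast+
    then show ?thesis using c1 c2 by (simp add: measure_pmf_of_set)
  qed
  have pw: "real p powr (real n - real l) = real p ^ n / real p ^ l"
    using p0 by (simp add: powr_diff powr_realpow)
  have key: "real p powr (real n - real l) * (real N / real p ^ n) = real N / real p ^ l"
    using p0 by (simp add: pw)
  have pos: "0 \<le> real N / real p ^ l" by simp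
  have q: "0 \<le> 1 / real p powr (real n - real l)" by simp
  have r: "0 \<le> 2 ^ l / real p powr (real n * (real l - 1))" by simp
  have "(1 - 1 / real p powr (real n - real l)) * real p powr (real n - real l) * (real N / real p ^ n)
      = (1 - 1 / real p powr (real n - real l)) * (real N / real p ^ l)"
    using key by (metis mult.assoc)
  also have "\<dots> \<le> real N / real p ^ l"
    using pos q by (simp add: mult_le_cancel_right1 algebra_simps)
  finally have L: "(1 - 1 / real p powr (real n - real l)) * real p powr (real n - real l) * (real N / real p ^ n)
      \<le> real N / real p ^ l" .
  show ?thesis
    using L r key E M unfolding A_def B_def T_def by simp
qed

end
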